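(* Let $n=2$. For every pair of distributions $G_1,G_2$ satisfying the standing assumptions, at least one of the qualified majority rules $f^{(1)}$ or $f^{(2)}$ solves program (OPT). In particular, the maximal expected welfare in (OPT) is achieved by an ordinal SCF.
   Context: There are $n\ge 2$ agents $N=\{1,\dots,n\}$ choosing between a Reform $R$ and the Status quo $S$. Agent $i$ gets utility $0$ if $S$ is chosen and utility $v_i\in\mathbb{R}$ if $R$ is chosen. Values are independent random variables $\tilde v_1,\dots,\tilde v_n$, $\tilde v_i\sim G_i$ (Borel probability distributions on $\mathbb{R}$, $G_i(0)=\Pr(\tilde v_i\le 0)$). Standing assumptions: all $\tilde v_i$ have the same support $V$ with $0\notin V$; $\mathbb{E}|\tilde v_i|<\infty$; $p_i:=1-G_i(0)\in(0,1)$. The distributions need not be identical. An SCF is a Borel measurable $f:V^n\to[0,1]$ (probability of choosing $R$). $f$ is anonymous if $f(v)=f(\pi v)$ for every $v\in V^n$ and every permutation $\pi$ of $N$, where $\pi v=(v_{\pi(1)},\dots,v_{\pi(n)})$. $f$ is BIC if for every $i$ and all $v_i,v_i'\in V$: $v_i\,\mathbb{E}(f(v_i,\tilde v_{-i}))\ge v_i\,\mathbb{E}(f(v_i',\tilde v_{-i}))$ (expectation over $\tilde v_{-i}=(\tilde v_j)_{j\neq i}$). Expected welfare is $W(f)=\mathbb{E}\big(f(\tilde v)\sum_{i=1}^n\tilde v_i\big)$. Program (OPT): maximize $W(f)$ subject to $f$ being anonymous and BIC. For $v\in V^n$ let $\chi(v)=\{i\in N: v_i>0\}$. $f$ is ordinal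 if $f(v)=f(v')$ whenever $\chi(v)=\chi(v')$. For $k\in\{1,\dots,n\}$, the qualified majority rule $f^{(k)}$ is $f^{(k)}(v)=1$ if $|\chi(v)|\ge k$ and $f^{(k)}(v)=0$ otherwise. *)

theory Defs
  imports "HOL-Probability.Probability"
begin

text \<open>A profile of values is a pair (v1, v2) :: real \<times> real.
  Agent i's value distribution is a Borel probability measure Gi on the reals;
  values are independent, so the joint law is the product measure of G1 and G2.\<close>

definition supp :: "real measure \<Rightarrow> real set" where
  "supp M = {x. \<forall>e>0. measure M (ball x e) > 0}"

definition standing_assumptions :: "real measure \<Rightarrow> real measure \<Rightarrow> real set \<Rightarrow> bool" where
  "standing_assumptions G1 G2 V \<longleftrightarrow>
     prob_space G1 \<and> prob_space G2 \<and>
     sets G1 = sets borel \<and> sets G2 = sets borel \<and>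
     supp G1 = V \<and> supp G2 = V \<and> 0 \<notin> V \<and>
     integrable G1 (\<lambda>x. x) \<and> integrable G2 (\<lambda>x. x) \<and>
     0 < measure G1 {x. x > 0} \<and> measure G1 {x. x > 0} < 1 \<and>
     0 < measure G2 {x. x > 0} \<and> measure G2 {x. x > 0} < 1"

text \<open>An SCF: Borel measurable, with values in [0,1] on V x V (only its values there matter).\<close>
definition SCF :: "real set \<Rightarrow> (real \<times> real \<Rightarrow> real) \<Rightarrow> bool" where
  "SCF V f \<longleftrightarrow> f \<in> borel_measurable borel \<and> (\<forall>v\<in>V \<times> V. 0 \<le> f v \<and> f v \<le> 1)"

text \<open>For n = 2 the permutations are the identity and the swap.\<close>
definition anonymous :: "real set \<Rightarrow> (real \<times> real \<Rightarrow> real) \<Rightarrow> bool" where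
  "anonymous V f \<longleftrightarrow> (\<forall>a\<in>V. \<forall>b\<in>V. f (a, b) = f (b, a))"

definition BIC :: "real measure \<Rightarrow> real measure \<Rightarrow> real set \<Rightarrow> (real \<times> real \<Rightarrow> real) \<Rightarrow> bool" where
  "BIC G1 G2 V f \<longleftrightarrow>
     (\<forall>v\<in>V. \<forall>v'\<in>V. v * (\<integral>x. f (v, x) \<partial>G2) \<ge> v * (\<integral>x. f (v', x) \<partial>G2)) \<and>
     (\<forall>v\<in>V. \<forall>v'\<in>V. v * (\<integral>x. f (x, v) \<partial>G1) \<ge> v * (\<integral>x. f (x, v') \<partial>G1))"

definition welfare :: "real measure \<Rightarrow> real measure \<Rightarrow> (real \<times> real \<Rightarrow> real) \<Rightarrow> real" where
  "welfare G1 G2 f = (\<integral>z. f z * (fst z + snd z) \<partial>(G1 \<Otimes>\<^sub>M G2))"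

definition feasible :: "real measure \<Rightarrow> real measure \<Rightarrow> real set \<Rightarrow> (real \<times> real \<Rightarrow> real) \<Rightarrow> bool" where
  "feasible G1 G2 V f \<longleftrightarrow> SCF V f \<and> anonymous V f \<and> BIC G1 G2 V f"

definition solves_OPT :: "real measure \<Rightarrow> real measure \<Rightarrow> real set \<Rightarrow> (real \<times> real \<Rightarrow> real) \<Rightarrow> bool" where
  "solves_OPT G1 G2 V f \<longleftrightarrow>
     feasible G1 G2 V f \<and> (\<forall>g. feasible G1 G2 V g \<longrightarrow> welfare G1 G2 g \<le> welfare G1 G2 f)"

definition chi :: "real \<times> real \<Rightarrow> nat set" where
  "chi v = {i. (i = 1 \<and> fst v > 0) \<or> (i = 2 \<and> snd v > 0)}"

definition ordinal :: "real set \<Rightarrow> (real \<times> real \<Rightarrow> real) \<Rightarrow> bool" where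
  "ordinal V f \<longleftrightarrow> (\<forall>v\<in>V \<times> V. \<forall>w\<in>V \<times> V. chi v = chi w \<longrightarrow> f v = f w)"

definition qmaj :: "nat \<Rightarrow> real \<times> real \<Rightarrow> real" where
  "qmaj k v = (if card (chi v) \<ge> k then 1 else 0)"

end

theory Submission
  imports Defs
begin

lemma meas_prod:
  fixes M1 M2 :: "real measure" and g :: "real \<times> real \<Rightarrow> real"
  assumes "g \<in> borel_measurable borel" "sets M1 = sets borel" "sets M2 = sets borel"
  shows "g \<in> borel_measurable (M1 \<Otimes>\<^sub>M M2)"
proof -
  have "sets (M1 \<Otimes>\<^sub>M M2) = sets (borel \<Otimes>\<^sub>M borel)"
    by (rule sets_pair_measure_cong) (use assms in auto)
  also have "\<dots> = sets (borel :: (real \<times> real) measure)" using borel_prod[where 'a=real and 'b=real] by metis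
  finally show ?thesis using assms(1) by (subst measurable_cong_sets[OF _ refl])
qed

lemma meas_slice1:
  fixes g :: "real \<times> real \<Rightarrow> real"
  assumes "g \<in> borel_measurable borel" "sets M = sets borel"
  shows "(\<lambda>y. g (x, y)) \<in> borel_measurable M"
proof -
  have "(\<lambda>y. g (x, y)) \<in> borel_measurable borel" using assms(1) by measurable
  then show ?thesis by (subst measurable_cong_sets[OF assms(2) refl])
qed

lemma meas_slice2:
  fixes g :: "real \<times> real \<Rightarrow> real"
  assumes "g \<in> borel_measurable borel" "sets M = sets borel"
  shows "(\<lambda>y. g (y, x)) \<in> borel_measurable M"
proof -
  have "(\<lambda>y. g (y, x)) \<in> borel_measurable borel" using assms(1) by measurable
  then show ?thesis by (subst measurable_cong_sets[OF assms(2) refl])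
qed

lemma AE_supp:
  assumes "prob_space M" "sets M = sets borel"
  shows "AE x in M. x \<in> supp M"
proof -
  interpret prob_space M by fact
  define F where "F = {ball x e | x e. e > 0 \<and> measure M (ball x e) = 0}"
  have "\<And>S. S \<in> F \<Longrightarrow> open S" unfolding F_def by auto
  then obtain F' where F': "F' \<subseteq> F" "countable F'" "\<Union>F' = \<Union>F" by (rule Lindelof)
  have "(\<Union>S\<in>F'. S) \<in> null_sets M"
  proof (rule null_sets_UN')
    show "countable F'" by fact
    fix S assume "S \<in> F'"
    then have "S \<in> F" using F' by auto
    then obtain x e where S: "S = ball x e" "measure M (ball x e) = 0" unfolding F_def by auto
    have "S \<in> sets M" using S assms(2) by auto
    then show "S \<in> null_sets M" using S by (simp add: emeasure_eq_measure null_sets_def)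
  qed
  moreover have "{x \<in> space M. \<not> x \<in> supp M} \<subseteq> (\<Union>S\<in>F'. S)"
  proof
    fix x assume "x \<in> {x \<in> space M. \<not> x \<in> supp M}"
    then obtain e where "e > 0" "\<not> measure M (ball x e) > 0" unfolding supp_def by auto
    then have "measure M (ball x e) = 0" using measure_nonneg[of M "ball x e"] by linarith
    then have "ball x e \<in> F" using \<open>e > 0\<close> unfolding F_def by auto
    then have "x \<in> \<Union>F" using \<open>e > 0\<close> by (meson UnionI centre_in_ball)
    then show "x \<in> (\<Union>S\<in>F'. S)" using F'(3) by auto
  qed
  ultimately show ?thesis by (rule AE_I')
qed

lemma slice_int1:
  fixes g :: "real \<times> real \<Rightarrow> real" and M :: "real measure"
  assumes "prob_space M" "sets M = sets borel" "g \<in> borel_measurable borel" "\<And>z. \<bar>g z\<bar> \<le> 1"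
  shows "integrable M (\<lambda>y. g (x, y))"
proof -
  interpret prob_space M by fact
  show ?thesis
    by (rule integrable_const_bound[where B=1]) (use assms meas_slice1 in auto)
qed

lemma slice_int2:
  fixes g :: "real \<times> real \<Rightarrow> real" and M :: "real measure"
  assumes "prob_space M" "sets M = sets borel" "g \<in> borel_measurable borel" "\<And>z. \<bar>g z\<bar> \<le> 1"
  shows "integrable M (\<lambda>y. g (y, x))"
proof -
  interpret prob_space M by fact
  show ?thesis
    by (rule integrable_const_bound[where B=1]) (use assms meas_slice2 in auto)
qed

lemma fub_fst:
  fixes M1 M2 :: "real measure" and g :: "real \<times> real \<Rightarrow> real" and a :: "real \<Rightarrow> real"
  assumes P1: "prob_space M1" and P2: "prob_space M2" and S1: "sets M1 = sets borel" and S2: "sets M2 = sets borel"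
    and gm: "g \<in> borel_measurable borel" and gb: "\<And>z. \<bar>g z\<bar> \<le> 1" and ai: "integrable M1 a"
  shows "integrable (M1 \<Otimes>\<^sub>M M2) (\<lambda>z. g z * a (fst z))"
    and "(\<integral>z. g z * a (fst z) \<partial>(M1 \<Otimes>\<^sub>M M2)) = (\<integral>x. a x * (\<integral>y. g (x, y) \<partial>M2) \<partial>M1)"
    and "integrable M1 (\<lambda>x. \<integral>y. g (x, y) \<partial>M2)"
proof -
  interpret P: pair_prob_space M1 M2
    by (simp add: pair_prob_space_def pair_sigma_finite_def prob_space_imp_sigma_finite P1 P2)
  have gM[measurable]: "g \<in> borel_measurable (M1 \<Otimes>\<^sub>M M2)" by (rule meas_prod[OF gm S1 S2])
  have am[measurable]: "a \<in> borel_measurable M1" using ai by auto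
  have "integrable (distr (M1 \<Otimes>\<^sub>M M2) M1 fst) a" using ai by (simp add: prob_space.distr_pair_fst[OF P2])
  then have i1: "integrable (M1 \<Otimes>\<^sub>M M2) (\<lambda>z. a (fst z))"
    by (subst (asm) integrable_distr_eq) auto
  show i2: "integrable (M1 \<Otimes>\<^sub>M M2) (\<lambda>z. g z * a (fst z))"
  proof (rule Bochner_Integration.integrable_bound[OF i1])
    show "(\<lambda>z. g z * a (fst z)) \<in> borel_measurable (M1 \<Otimes>\<^sub>M M2)" by measurable
    show "AE z in M1 \<Otimes>\<^sub>M M2. norm (g z * a (fst z)) \<le> norm (a (fst z))"
    proof (intro AE_I2)
      fix z
      have "\<bar>g z\<bar> * \<bar>a (fst z)\<bar> \<le> 1 * \<bar>a (fst z)\<bar>" using gb[of z] by (intro mult_right_mono) auto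
      then show "norm (g z * a (fst z)) \<le> norm (a (fst z))" by (simp add: abs_mult)
    qed
  qed
  have "(\<integral>z. g z * a (fst z) \<partial>(M1 \<Otimes>\<^sub>M M2)) = (\<integral>x. \<integral>y. g (x, y) * a x \<partial>M2 \<partial>M1)"
    using P.integral_fst'[OF i2] by simp
  also have "\<dots> = (\<integral>x. a x * (\<integral>y. g (x, y) \<partial>M2) \<partial>M1)"
    by (intro Bochner_Integration.integral_cong refl) (simp add: mult.commute)
  finally show "(\<integral>z. g z * a (fst z) \<partial>(M1 \<Otimes>\<^sub>M M2)) = (\<integral>x. a x * (\<integral>y. g (x, y) \<partial>M2) \<partial>M1)" .
  have i3: "integrable (M1 \<Otimes>\<^sub>M M2) g"
    by (rule P.integrable_const_bound[where B=1]) (use gb in auto)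
  show "integrable M1 (\<lambda>x. \<integral>y. g (x, y) \<partial>M2)"
    using P.integrable_fst'[OF i3] by simp
qed

lemma fub_snd:
  fixes M1 M2 :: "real measure" and g :: "real \<times> real \<Rightarrow> real" and b :: "real \<Rightarrow> real"
  assumes P1: "prob_space M1" and P2: "prob_space M2" and S1: "sets M1 = sets borel" and S2: "sets M2 = sets borel"
    and gm: "g \<in> borel_measurable borel" and gb: "\<And>z. \<bar>g z\<bar> \<le> 1" and bi: "integrable M2 b"
  shows "integrable (M1 \<Otimes>\<^sub>M M2) (\<lambda>z. g z * b (snd z))"
    and "(\<integral>z. g z * b (snd z) \<partial>(M1 \<Otimes>\<^sub>M M2)) = (\<integral>y. b y * (\<integral>x. g (x, y) \<partial>M1) \<partial>M2)"
    and "integrable M2 (\<lambda>y. \<integral>x. g (x, y) \<partial>M1)"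
proof -
  interpret P: pair_prob_space M1 M2
    by (simp add: pair_prob_space_def pair_sigma_finite_def prob_space_imp_sigma_finite P1 P2)
  interpret M1: prob_space M1 by fact
  have gM[measurable]: "g \<in> borel_measurable (M1 \<Otimes>\<^sub>M M2)" by (rule meas_prod[OF gm S1 S2])
  have bm[measurable]: "b \<in> borel_measurable M2" using bi by auto
  have i1: "integrable (M1 \<Otimes>\<^sub>M M2) (\<lambda>z. b (snd z))"
  proof (rule P.Fubini_integrable)
    show "(\<lambda>z. b (snd z)) \<in> borel_measurable (M1 \<Otimes>\<^sub>M M2)" by measurable
    show "integrable M1 (\<lambda>x. \<integral>y. norm (b (snd (x, y))) \<partial>M2)" by simp
    show "AE x in M1. integrable M2 (\<lambda>y. b (snd (x, y)))" using bi by simp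
  qed
  show i2: "integrable (M1 \<Otimes>\<^sub>M M2) (\<lambda>z. g z * b (snd z))"
  proof (rule Bochner_Integration.integrable_bound[OF i1])
    show "(\<lambda>z. g z * b (snd z)) \<in> borel_measurable (M1 \<Otimes>\<^sub>M M2)" by measurable
    show "AE z in M1 \<Otimes>\<^sub>M M2. norm (g z * b (snd z)) \<le> norm (b (snd z))"
    proof (intro AE_I2)
      fix z
      have "\<bar>g z\<bar> * \<bar>b (snd z)\<bar> \<le> 1 * \<bar>b (snd z)\<bar>" using gb[of z] by (intro mult_right_mono) auto
      then show "norm (g z * b (snd z)) \<le> norm (b (snd z))" by (simp add: abs_mult)
    qed
  qed
  have eq: "(\<lambda>(x, y). g (x, y) * b y) = (\<lambda>z. g z * b (snd z))" by auto
  have i2': "integrable (M1 \<Otimes>\<^sub>M M2) (case_prod (\<lambda>x y. g (x, y) * b y))"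
    using i2 by (simp add: eq)
  have "(\<integral>z. g z * b (snd z) \<partial>(M1 \<Otimes>\<^sub>M M2)) = (\<integral>y. \<integral>x. g (x, y) * b y \<partial>M1 \<partial>M2)"
    using P.integral_snd[OF i2'] by (simp add: eq)
  also have "\<dots> = (\<integral>y. b y * (\<integral>x. g (x, y) \<partial>M1) \<partial>M2)"
    by (intro Bochner_Integration.integral_cong refl) (simp add: mult.commute)
  finally show "(\<integral>z. g z * b (snd z) \<partial>(M1 \<Otimes>\<^sub>M M2)) = (\<integral>y. b y * (\<integral>x. g (x, y) \<partial>M1) \<partial>M2)" .
  have i3: "integrable (M1 \<Otimes>\<^sub>M M2) (case_prod (\<lambda>x y. g (x, y)))"
    by (rule P.integrable_const_bound[where B=1]) (use gb in auto)
  show "integrable M2 (\<lambda>y. \<integral>x. g (x, y) \<partial>M1)"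
    using P.integrable_snd[OF i3] by simp
qed

lemma bm_M:
  fixes M :: "real measure" and f :: "real \<Rightarrow> real"
  assumes "sets M = sets borel" "f \<in> borel_measurable borel"
  shows "f \<in> borel_measurable M"
  using assms by (subst measurable_cong_sets[OF assms(1) refl])

lemma space_borel_M:
  fixes M :: "real measure"
  assumes "sets M = sets borel"
  shows "space M = UNIV"
  using sets_eq_imp_space_eq[OF assms] by simp

lemma ind_pos:
  fixes M :: "real measure"
  assumes P: "prob_space M" and S: "sets M = sets borel"
  shows "integrable M (indicator {x::real. 0 < x} :: real \<Rightarrow> real)"
    and "(\<integral>x. (indicator {x::real. 0 < x} x :: real) \<partial>M) = measure M {x. 0 < x}"
proof -
  interpret prob_space M by fact
  have "{x::real. 0 < x} \<in> sets M" using S by simp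
  then show "integrable M (indicator {x::real. 0 < x} :: real \<Rightarrow> real)"
    by (intro integrable_real_indicator) (simp_all add: emeasure_eq_measure)
  show "(\<integral>x. (indicator {x::real. 0 < x} x :: real) \<partial>M) = measure M {x. 0 < x}"
    using space_borel_M[OF S] by simp
qed

lemma meas_from_pair:
  fixes f :: "real \<times> real \<Rightarrow> real"
  assumes "f \<in> borel_measurable (borel \<Otimes>\<^sub>M borel)"
  shows "f \<in> borel_measurable borel"
  using assms by (simp add: borel_prod)

lemma bounded_int:
  fixes M :: "real measure" and f :: "real \<Rightarrow> real"
  assumes "prob_space M" "f \<in> borel_measurable M" "\<And>x. \<bar>f x\<bar> \<le> 1"
  shows "integrable M f"
proof -
  interpret prob_space M by fact
  show ?thesis by (rule integrable_const_bound[where B=1]) (use assms in auto)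
qed

lemma sq_bound:
  fixes M :: "real measure" and g :: "real \<times> real \<Rightarrow> real"
  assumes P: "prob_space M" and S: "sets M = sets borel" and gm: "g \<in> borel_measurable borel"
    and g01: "\<And>z. 0 \<le> g z \<and> g z \<le> 1" and sym: "\<And>x y. g (x, y) = g (y, x)"
  shows "(\<integral>x. (if x > 0 then 1 else -1) * (\<integral>y. g (x, y) \<partial>M) \<partial>M) \<le> (measure M {x. 0 < x})\<^sup>2"
proof -
  interpret P: pair_prob_space M M
    by (simp add: pair_prob_space_def pair_sigma_finite_def prob_space_imp_sigma_finite P)
  interpret Mp: prob_space M by fact
  define s where "s = (\<lambda>x::real. if x > 0 then 1 else (-1::real))"
  have sm: "s \<in> borel_measurable borel" unfolding s_def by measurable
  have si: "integrable M s"
    by (rule bounded_int[OF P bm_M[OF S sm]]) (simp add: s_def)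
  have gb: "\<And>z. \<bar>g z\<bar> \<le> 1" using g01 by (simp add: abs_le_iff)
  have gM[measurable]: "g \<in> borel_measurable (M \<Otimes>\<^sub>M M)" by (rule meas_prod[OF gm S S])
  have smM[measurable]: "s \<in> borel_measurable M" by (rule bm_M[OF S sm])
  have L: "(\<integral>x. s x * (\<integral>y. g (x, y) \<partial>M) \<partial>M) = (\<integral>z. g z * s (fst z) \<partial>(M \<Otimes>\<^sub>M M))"
    using fub_fst(2)[OF P P S S gm gb si] by simp
  have sw: "(\<integral>z. g z * s (fst z) \<partial>(M \<Otimes>\<^sub>M M)) = (\<integral>z. g z * s (snd z) \<partial>(M \<Otimes>\<^sub>M M))"
  proof -
    have "(\<integral>(x,y). (\<lambda>z. g z * s (fst z)) (y,x) \<partial>(M \<Otimes>\<^sub>M M)) = (\<integral>z. g z * s (fst z) \<partial>(M \<Otimes>\<^sub>M M))"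
      by (rule P.integral_product_swap) measurable
    moreover have "(\<lambda>(x,y). (\<lambda>z. g z * s (fst z)) (y,x)) = (\<lambda>z. g z * s (snd z))"
      using sym by auto
    ultimately show ?thesis by simp
  qed
  have i1: "integrable (M \<Otimes>\<^sub>M M) (\<lambda>z. g z * s (fst z))" by (rule fub_fst(1)[OF P P S S gm gb si])
  have i2: "integrable (M \<Otimes>\<^sub>M M) (\<lambda>z. g z * s (snd z))" by (rule fub_snd(1)[OF P P S S gm gb si])
  define k where "k = (\<lambda>z::real \<times> real. (indicator {x::real. 0 < x} (snd z) :: real) * indicator {x::real. 0 < x} (fst z))"
  have hm: "(\<lambda>z::real \<times> real. (indicator {x::real. 0 < x} (snd z) :: real)) \<in> borel_measurable borel"
    by (rule meas_from_pair) measurable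
  have hb: "\<And>z. \<bar>(\<lambda>z::real \<times> real. (indicator {x::real. 0 < x} (snd z) :: real)) z\<bar> \<le> 1"
    by (simp add: indicator_def)
  have ik: "integrable (M \<Otimes>\<^sub>M M) k"
    unfolding k_def by (rule fub_fst(1)[OF P P S S hm hb ind_pos(1)[OF P S]])
  have "(\<integral>z. k z \<partial>(M \<Otimes>\<^sub>M M)) = (\<integral>x. indicator {x::real. 0 < x} x * (\<integral>y. indicator {x::real. 0 < x} y \<partial>M) \<partial>M)"
    unfolding k_def using fub_fst(2)[OF P P S S hm hb ind_pos(1)[OF P S]] by simp
  also have "\<dots> = (\<integral>x. indicator {x::real. 0 < x} x * measure M {x. 0 < x} \<partial>M)"
    using ind_pos(2)[OF P S] by simp
  also have "\<dots> = measure M {x. 0 < x} * measure M {x. 0 < x}"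
    using ind_pos[OF P S] by simp
  finally have Ik: "(\<integral>z. k z \<partial>(M \<Otimes>\<^sub>M M)) = (measure M {x. 0 < x})\<^sup>2"
    by (simp add: power2_eq_square)
  have "2 * (\<integral>x. s x * (\<integral>y. g (x, y) \<partial>M) \<partial>M)
      = (\<integral>z. g z * s (fst z) \<partial>(M \<Otimes>\<^sub>M M)) + (\<integral>z. g z * s (snd z) \<partial>(M \<Otimes>\<^sub>M M))"
    using L sw by simp
  also have "\<dots> = (\<integral>z. g z * s (fst z) + g z * s (snd z) \<partial>(M \<Otimes>\<^sub>M M))"
    using i1 i2 by simp
  also have "\<dots> \<le> (\<integral>z. 2 * k z \<partial>(M \<Otimes>\<^sub>M M))"
  proof (rule integral_mono)
    show "integrable (M \<Otimes>\<^sub>M M) (\<lambda>z. g z * s (fst z) + g z * s (snd z))" using i1 i2 by simp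
    show "integrable (M \<Otimes>\<^sub>M M) (\<lambda>z. 2 * k z)" using ik by simp
    fix z :: "real \<times> real"
    show "g z * s (fst z) + g z * s (snd z) \<le> 2 * k z"
      using g01[of z] unfolding s_def k_def by (auto simp: indicator_def)
  qed
  also have "\<dots> = 2 * (measure M {x. 0 < x})\<^sup>2" using Ik by simp
  finally show ?thesis unfolding s_def by simp
qed

definition mpos :: "real measure \<Rightarrow> real" where
  "mpos M = (\<integral>x. (if x > 0 then x else 0) \<partial>M)"
definition mneg :: "real measure \<Rightarrow> real" where
  "mneg M = (\<integral>x. (if x > 0 then 0 else x) \<partial>M)"

lemma step_int:
  fixes M :: "real measure" and q :: "real \<Rightarrow> real" and V :: "real set" and A B :: real
  assumes P: "prob_space M" and S: "sets M = sets borel" and AEV: "AE x in M. x \<in> V"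
    and qV: "\<And>x. x \<in> V \<Longrightarrow> q x = (if x > 0 then A else B)"
    and qm: "q \<in> borel_measurable M" and xi: "integrable M (\<lambda>x. x)"
  shows "(\<integral>x. q x \<partial>M) = A * measure M {x. 0 < x} + B * (1 - measure M {x. 0 < x})"
    and "(\<integral>x. (if x > 0 then 1 else -1) * q x \<partial>M) = A * measure M {x. 0 < x} - B * (1 - measure M {x. 0 < x})"
    and "(\<integral>x. x * q x \<partial>M) = A * mpos M + B * mneg M"
proof -
  interpret prob_space M by fact
  note ii = ind_pos[OF P S]
  note qm[measurable]
  have xm[measurable]: "(\<lambda>x::real. x) \<in> borel_measurable M" using xi by auto
  have im[measurable]: "(indicator {x::real. 0 < x} :: real \<Rightarrow> real) \<in> borel_measurable M"
    using ii(1) by auto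
  have "(\<integral>x. q x \<partial>M) = (\<integral>x. B + (A - B) * indicator {x::real. 0 < x} x \<partial>M)"
  proof (rule integral_cong_AE)
    show "q \<in> borel_measurable M" by fact
    show "(\<lambda>x. B + (A - B) * indicator {x::real. 0 < x} x) \<in> borel_measurable M" by measurable
    show "AE x in M. q x = B + (A - B) * indicator {x::real. 0 < x} x"
      using AEV by eventually_elim (auto simp: qV indicator_def)
  qed
  also have "\<dots> = B + (A - B) * measure M {x. 0 < x}"
    using ii by (simp add: prob_space)
  finally show "(\<integral>x. q x \<partial>M) = A * measure M {x. 0 < x} + B * (1 - measure M {x. 0 < x})"
    by (simp add: algebra_simps)
  have "(\<integral>x. (if x > 0 then 1 else -1) * q x \<partial>M) = (\<integral>x. - B + (A + B) * indicator {x::real. 0 < x} x \<partial>M)"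
  proof (rule integral_cong_AE)
    show "(\<lambda>x. (if x > 0 then 1 else -1) * q x) \<in> borel_measurable M" by measurable
    show "(\<lambda>x. - B + (A + B) * indicator {x::real. 0 < x} x) \<in> borel_measurable M" by measurable
    show "AE x in M. (if x > 0 then 1 else -1) * q x = - B + (A + B) * indicator {x::real. 0 < x} x"
      using AEV by eventually_elim (auto simp: qV indicator_def)
  qed
  also have "\<dots> = - B + (A + B) * measure M {x. 0 < x}"
    using ii by (simp add: prob_space)
  finally show "(\<integral>x. (if x > 0 then 1 else -1) * q x \<partial>M) = A * measure M {x. 0 < x} - B * (1 - measure M {x. 0 < x})"
    by (simp add: algebra_simps)
  have ip: "integrable M (\<lambda>x::real. if x > 0 then x else 0)"
  proof (rule Bochner_Integration.integrable_bound[OF xi])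
    show "(\<lambda>x::real. if x > 0 then x else 0) \<in> borel_measurable M" by measurable
    show "AE x in M. norm (if x > 0 then x else (0::real)) \<le> norm x" by auto
  qed
  have ineg: "integrable M (\<lambda>x::real. if x > 0 then 0 else x)"
  proof (rule Bochner_Integration.integrable_bound[OF xi])
    show "(\<lambda>x::real. if x > 0 then 0 else x) \<in> borel_measurable M" by measurable
    show "AE x in M. norm (if x > 0 then 0 else x) \<le> norm (x::real)" by auto
  qed
  have "(\<integral>x. x * q x \<partial>M) = (\<integral>x. A * (if x > 0 then x else 0) + B * (if x > 0 then 0 else x) \<partial>M)"
  proof (rule integral_cong_AE)
    show "(\<lambda>x. x * q x) \<in> borel_measurable M" by measurable
    show "(\<lambda>x. A * (if x > 0 then x else 0) + B * (if x > 0 then 0 else x)) \<in> borel_measurable M" by measurable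
    show "AE x in M. x * q x = A * (if x > 0 then x else 0) + B * (if x > 0 then 0 else x)"
      using AEV by eventually_elim (auto simp: qV)
  qed
  also have "\<dots> = A * mpos M + B * mneg M"
    using ip ineg by (simp add: mpos_def mneg_def)
  finally show "(\<integral>x. x * q x \<partial>M) = A * mpos M + B * mneg M" .
qed

lemma closed_supp:
  fixes M :: "real measure"
  assumes P: "prob_space M" and S: "sets M = sets borel"
  shows "closed (supp M)"
proof -
  interpret prob_space M by fact
  have "open (- supp M)" unfolding open_contains_ball
  proof (intro ballI)
    fix x assume "x \<in> - supp M"
    then obtain e where e: "e > 0" "measure M (ball x e) \<le> 0" unfolding supp_def by (auto simp: not_less)
    have "ball x e \<subseteq> - supp M"
    proof
      fix y assume y: "y \<in> ball x e"
      define r where "r = e - dist x y"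
      have r: "r > 0" using y by (simp add: r_def)
      have "ball y r \<subseteq> ball x e"
      proof
        fix z assume "z \<in> ball y r"
        then have "dist y z < r" by simp
        moreover have "dist x z \<le> dist x y + dist y z" by (rule dist_triangle)
        ultimately show "z \<in> ball x e" by (simp add: r_def)
      qed
      then have "measure M (ball y r) \<le> measure M (ball x e)"
        by (rule finite_measure_mono) (simp add: S)
      then have "\<not> measure M (ball y r) > 0" using e by linarith
      then show "y \<in> - supp M" unfolding supp_def using r by auto
    qed
    then show "\<exists>e>0. ball x e \<subseteq> - supp M" using e by blast
  qed
  then show ?thesis by (simp add: closed_def)
qed

lemma sets_prod:
  fixes M1 M2 :: "real measure"
  assumes "sets M1 = sets borel" "sets M2 = sets borel"
  shows "sets (M1 \<Otimes>\<^sub>M M2) = sets (borel :: (real \<times> real) measure)"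
proof -
  have "sets (M1 \<Otimes>\<^sub>M M2) = sets (borel \<Otimes>\<^sub>M borel)"
    by (rule sets_pair_measure_cong) (use assms in auto)
  also have "\<dots> = sets (borel :: (real \<times> real) measure)" using borel_prod[where 'a=real and 'b=real] by metis
  finally show ?thesis .
qed

lemma const_one_int:
  fixes M :: "real measure"
  assumes "prob_space M"
  shows "integrable M (\<lambda>_. 1::real)"
proof -
  interpret prob_space M by fact
  show ?thesis by simp
qed

lemma slice_bounds:
  fixes M :: "real measure" and g :: "real \<times> real \<Rightarrow> real"
  assumes P: "prob_space M" and S: "sets M = sets borel" and gm: "g \<in> borel_measurable borel"
    and g01: "\<And>z. 0 \<le> g z \<and> g z \<le> 1"
  shows "0 \<le> (\<integral>y. g (v, y) \<partial>M)" and "(\<integral>y. g (v, y) \<partial>M) \<le> 1"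
proof -
  interpret prob_space M by fact
  have gb: "\<And>z. \<bar>g z\<bar> \<le> 1" using g01 by (simp add: abs_le_iff)
  show "0 \<le> (\<integral>y. g (v, y) \<partial>M)" by (rule integral_nonneg_AE) (use g01 in auto)
  have "(\<integral>y. g (v, y) \<partial>M) \<le> (\<integral>y. 1 \<partial>M)"
    by (rule integral_mono[OF slice_int1[OF P S gm gb]]) (use g01 in auto)
  then show "(\<integral>y. g (v, y) \<partial>M) \<le> 1" by (simp add: prob_space)
qed

lemma welfare_formula:
  fixes G1 G2 :: "real measure" and g :: "real \<times> real \<Rightarrow> real" and V :: "real set" and A1 B1 A2 B2 :: real
  assumes P1: "prob_space G1" and P2: "prob_space G2" and S1: "sets G1 = sets borel" and S2: "sets G2 = sets borel"
    and gm: "g \<in> borel_measurable borel" and gb: "\<And>z. \<bar>g z\<bar> \<le> 1"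
    and AEV1: "AE x in G1. x \<in> V" and AEV2: "AE x in G2. x \<in> V"
    and i1: "integrable G1 (\<lambda>x. x)" and i2: "integrable G2 (\<lambda>x. x)"
    and q1: "\<And>v. v \<in> V \<Longrightarrow> (\<integral>y. g (v, y) \<partial>G2) = (if v > 0 then A1 else B1)"
    and q2: "\<And>v. v \<in> V \<Longrightarrow> (\<integral>x. g (x, v) \<partial>G1) = (if v > 0 then A2 else B2)"
  shows "welfare G1 G2 g = A1 * mpos G1 + B1 * mneg G1 + A2 * mpos G2 + B2 * mneg G2"
    and "A1 * measure G1 {x. 0 < x} + B1 * (1 - measure G1 {x. 0 < x})
       = A2 * measure G2 {x. 0 < x} + B2 * (1 - measure G2 {x. 0 < x})"
proof -
  interpret P: pair_prob_space G1 G2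
    by (simp add: pair_prob_space_def pair_sigma_finite_def prob_space_imp_sigma_finite P1 P2)
  have Q1m: "(\<lambda>x. \<integral>y. g (x, y) \<partial>G2) \<in> borel_measurable G1"
    using fub_fst(3)[OF P1 P2 S1 S2 gm gb i1] by auto
  have Q2m: "(\<lambda>y. \<integral>x. g (x, y) \<partial>G1) \<in> borel_measurable G2"
    using fub_snd(3)[OF P1 P2 S1 S2 gm gb i2] by auto
  have ia: "integrable (G1 \<Otimes>\<^sub>M G2) (\<lambda>z. g z * fst z)"
    using fub_fst(1)[OF P1 P2 S1 S2 gm gb i1] by simp
  have ib: "integrable (G1 \<Otimes>\<^sub>M G2) (\<lambda>z. g z * snd z)"
    using fub_snd(1)[OF P1 P2 S1 S2 gm gb i2] by simp
  have "welfare G1 G2 g = (\<integral>z. g z * fst z + g z * snd z \<partial>(G1 \<Otimes>\<^sub>M G2))"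
    by (simp add: welfare_def distrib_left)
  also have "\<dots> = (\<integral>z. g z * fst z \<partial>(G1 \<Otimes>\<^sub>M G2)) + (\<integral>z. g z * snd z \<partial>(G1 \<Otimes>\<^sub>M G2))"
    using ia ib by simp
  also have "\<dots> = (\<integral>x. x * (\<integral>y. g (x, y) \<partial>G2) \<partial>G1) + (\<integral>y. y * (\<integral>x. g (x, y) \<partial>G1) \<partial>G2)"
    using fub_fst(2)[OF P1 P2 S1 S2 gm gb i1] fub_snd(2)[OF P1 P2 S1 S2 gm gb i2] by simp
  also have "\<dots> = A1 * mpos G1 + B1 * mneg G1 + (A2 * mpos G2 + B2 * mneg G2)"
    using step_int(3)[OF P1 S1 AEV1, where q="\<lambda>x. \<integral>y. g (x, y) \<partial>G2", OF q1 Q1m i1]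
          step_int(3)[OF P2 S2 AEV2, where q="\<lambda>y. \<integral>x. g (x, y) \<partial>G1", OF q2 Q2m i2]
    by simp
  finally show "welfare G1 G2 g = A1 * mpos G1 + B1 * mneg G1 + A2 * mpos G2 + B2 * mneg G2" by simp
  have c1: "integrable G1 (\<lambda>_. 1::real)" by (rule const_one_int[OF P1])
  have c2: "integrable G2 (\<lambda>_. 1::real)" by (rule const_one_int[OF P2])
  have "(\<integral>x. (\<integral>y. g (x, y) \<partial>G2) \<partial>G1) = (\<integral>z. g z \<partial>(G1 \<Otimes>\<^sub>M G2))"
    using fub_fst(2)[OF P1 P2 S1 S2 gm gb c1] by simp
  also have "\<dots> = (\<integral>y. (\<integral>x. g (x, y) \<partial>G1) \<partial>G2)"
    using fub_snd(2)[OF P1 P2 S1 S2 gm gb c2] by simp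
  finally show "A1 * measure G1 {x. 0 < x} + B1 * (1 - measure G1 {x. 0 < x})
       = A2 * measure G2 {x. 0 < x} + B2 * (1 - measure G2 {x. 0 < x})"
    using step_int(1)[OF P1 S1 AEV1, where q="\<lambda>x. \<integral>y. g (x, y) \<partial>G2", OF q1 Q1m i1]
          step_int(1)[OF P2 S2 AEV2, where q="\<lambda>y. \<integral>x. g (x, y) \<partial>G1", OF q2 Q2m i2]
    by simp
qed

lemma constraint:
  fixes M :: "real measure" and g :: "real \<times> real \<Rightarrow> real" and V :: "real set" and A B :: real
  assumes P: "prob_space M" and S: "sets M = sets borel" and gm: "g \<in> borel_measurable borel"
    and g01: "\<And>z. 0 \<le> g z \<and> g z \<le> 1" and sym: "\<And>x y. g (x, y) = g (y, x)"
    and AEV: "AE x in M. x \<in> V" and xint: "integrable M (\<lambda>x. x)"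
    and q: "\<And>v. v \<in> V \<Longrightarrow> (\<integral>y. g (v, y) \<partial>M) = (if v > 0 then A else B)"
  shows "measure M {x. 0 < x} * A - (1 - measure M {x. 0 < x}) * B \<le> (measure M {x. 0 < x})\<^sup>2"
proof -
  have gb: "\<And>z. \<bar>g z\<bar> \<le> 1" using g01 by (simp add: abs_le_iff)
  have Qm: "(\<lambda>x. \<integral>y. g (x, y) \<partial>M) \<in> borel_measurable M"
    using fub_fst(3)[OF P P S S gm gb const_one_int[OF P]] by auto
  have xi: "integrable M (\<lambda>x. if x > 0 then 1 else 0 :: real)"
    by (rule bounded_int[OF P bm_M[OF S]]) auto
  have "(\<integral>x. (if x > 0 then 1 else -1) * (\<integral>y. g (x, y) \<partial>M) \<partial>M)
      = A * measure M {x. 0 < x} - B * (1 - measure M {x. 0 < x})"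
  proof -
    interpret prob_space M by fact
    have "(\<integral>x. (if x > 0 then 1 else -1) * (\<integral>y. g (x, y) \<partial>M) \<partial>M)
      = (\<integral>x. (if x > 0 then 1 else -1) * (if x > 0 then A else B) \<partial>M)"
    proof (rule integral_cong_AE)
      note Qm[measurable]
      have [measurable]: "(\<lambda>x::real. x) \<in> borel_measurable M" by (rule bm_M[OF S]) simp
      show "(\<lambda>x. (if x > 0 then 1 else -1) * (\<integral>y. g (x, y) \<partial>M)) \<in> borel_measurable M"
        by measurable
      show "(\<lambda>x. (if x > 0 then 1 else -1) * (if x > 0 then A else B :: real)) \<in> borel_measurable M"
        by (rule bm_M[OF S]) measurable
      show "AE x in M. (if x > 0 then 1 else -1) * (\<integral>y. g (x, y) \<partial>M) = (if x > 0 then 1 else -1) * (if x > 0 then A else B)"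
        using AEV by eventually_elim (simp add: q)
    qed
    also have "\<dots> = A * measure M {x. 0 < x} - B * (1 - measure M {x. 0 < x})"
      by (rule step_int(2)[OF P S, where V=UNIV]) (auto intro: bm_M[OF S] xint)
    finally show ?thesis .
  qed
  moreover have "(\<integral>x. (if x > 0 then 1 else -1) * (\<integral>y. g (x, y) \<partial>M) \<partial>M) \<le> (measure M {x. 0 < x})\<^sup>2"
    by (rule sq_bound[OF P S gm g01 sym])
  ultimately show ?thesis by (simp add: mult.commute)
qed

lemma LP_bound:
  fixes p1 p2 A1 B1 A2 B2 m1p m1m m2p m2m :: real
  assumes p1: "0 < p1" "p1 < 1" and p2: "0 < p2" "p2 < 1"
    and m: "0 \<le> m1p" "m1m \<le> 0" "0 \<le> m2p" "m2m \<le> 0"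
    and AB: "A1 \<le> 1" "0 \<le> B1" "A2 \<le> 1" "0 \<le> B2"
    and ca: "p2 * A1 - (1 - p2) * B1 \<le> p2\<^sup>2"
    and cb: "p1 * A2 - (1 - p1) * B2 \<le> p1\<^sup>2"
    and cc: "p1 * A1 + (1 - p1) * B1 = p2 * A2 + (1 - p2) * B2"
  shows "A1 * m1p + B1 * m1m + A2 * m2p + B2 * m2m
         \<le> max (m1p + p2 * m1m + m2p + p1 * m2m) (p2 * m1p + p1 * m2p)"
proof -
  define t where "t = p1 * A1 + (1 - p1) * B1 - p1 * p2"
  have t2: "t = p2 * A2 + (1 - p2) * B2 - p1 * p2" using cc t_def by simp
  define D where "D = p1 * (1 - p2) + (1 - p1) * p2"
  have Dpos: "D > 0" unfolding D_def using p1 p2 by (simp add: add_pos_pos)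
  define g1 where "g1 = A1 * m1p + B1 * m1m - p2 * m1p"
  define g2 where "g2 = A2 * m2p + B2 * m2m - p1 * m2p"
  define K1 where "K1 = m1p * (1 - p2) + m1m * p2"
  define K2 where "K2 = m2p * (1 - p1) + m2m * p1"
  have e0a: "p1 * g1 - m1p * t = B1 * (p1 * m1m - (1 - p1) * m1p)"
    unfolding g1_def t_def by algebra
  have s0a: "B1 * (p1 * m1m - (1 - p1) * m1p) \<le> 0"
  proof (rule mult_nonneg_nonpos)
    show "0 \<le> B1" using AB by simp
    have "p1 * m1m \<le> 0" using m p1 by (simp add: mult_nonneg_nonpos)
    moreover have "(1 - p1) * m1p \<ge> 0" using m p1 by simp
    ultimately show "p1 * m1m - (1 - p1) * m1p \<le> 0" by linarith
  qed
  have e0b: "p2 * g2 - m2p * t = B2 * (p2 * m2m - (1 - p2) * m2p)"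
    unfolding g2_def t2 by algebra
  have s0b: "B2 * (p2 * m2m - (1 - p2) * m2p) \<le> 0"
  proof (rule mult_nonneg_nonpos)
    show "0 \<le> B2" using AB by simp
    have "p2 * m2m \<le> 0" using m p2 by (simp add: mult_nonneg_nonpos)
    moreover have "(1 - p2) * m2p \<ge> 0" using m p2 by simp
    ultimately show "p2 * m2m - (1 - p2) * m2p \<le> 0" by linarith
  qed
  have e1a: "D * g1 - K1 * t = - ((m1p * (1 - p1) - m1m * p1) * ((1 - p2) * B1 - p2 * (A1 - p2)))"
    unfolding D_def g1_def K1_def t_def by algebra
  have s1a: "(m1p * (1 - p1) - m1m * p1) * ((1 - p2) * B1 - p2 * (A1 - p2)) \<ge> 0"
  proof (rule mult_nonneg_nonneg)
    have "m1m * p1 \<le> 0" using m p1 by (simp add: mult_nonpos_nonneg)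
    moreover have "m1p * (1 - p1) \<ge> 0" using m p1 by simp
    ultimately show "0 \<le> m1p * (1 - p1) - m1m * p1" by linarith
    show "0 \<le> (1 - p2) * B1 - p2 * (A1 - p2)" using ca by (simp add: algebra_simps power2_eq_square)
  qed
  have e1b: "D * g2 - K2 * t = - ((m2p * (1 - p2) - m2m * p2) * ((1 - p1) * B2 - p1 * (A2 - p1)))"
    unfolding D_def g2_def K2_def t2 by algebra
  have s1b: "(m2p * (1 - p2) - m2m * p2) * ((1 - p1) * B2 - p1 * (A2 - p1)) \<ge> 0"
  proof (rule mult_nonneg_nonneg)
    have "m2m * p2 \<le> 0" using m p2 by (simp add: mult_nonpos_nonneg)
    moreover have "m2p * (1 - p2) \<ge> 0" using m p2 by simp
    ultimately show "0 \<le> m2p * (1 - p2) - m2m * p2" by linarith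
    show "0 \<le> (1 - p1) * B2 - p1 * (A2 - p1)" using cb by (simp add: algebra_simps power2_eq_square)
  qed
  have e2a: "(1 - p1) * (g1 - K1) - m1m * (t - D) = (A1 - 1) * ((1 - p1) * m1p - p1 * m1m)"
    unfolding g1_def K1_def t_def D_def by algebra
  have s2a: "(A1 - 1) * ((1 - p1) * m1p - p1 * m1m) \<le> 0"
  proof (rule mult_nonpos_nonneg)
    show "A1 - 1 \<le> 0" using AB by simp
    have "p1 * m1m \<le> 0" using m p1 by (simp add: mult_nonneg_nonpos)
    moreover have "(1 - p1) * m1p \<ge> 0" using m p1 by simp
    ultimately show "0 \<le> (1 - p1) * m1p - p1 * m1m" by linarith
  qed
  have e2b: "(1 - p2) * (g2 - K2) - m2m * (t - D) = (A2 - 1) * ((1 - p2) * m2p - p2 * m2m)"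
    unfolding g2_def K2_def t2 D_def by algebra
  have s2b: "(A2 - 1) * ((1 - p2) * m2p - p2 * m2m) \<le> 0"
  proof (rule mult_nonpos_nonneg)
    show "A2 - 1 \<le> 0" using AB by simp
    have "p2 * m2m \<le> 0" using m p2 by (simp add: mult_nonneg_nonpos)
    moreover have "(1 - p2) * m2p \<ge> 0" using m p2 by simp
    ultimately show "0 \<le> (1 - p2) * m2p - p2 * m2m" by linarith
  qed
  have main: "g1 + g2 \<le> max (K1 + K2) 0"
  proof (cases "t \<le> 0")
    case True
    have "m1p * t \<le> 0" using m True by (simp add: mult_nonneg_nonpos)
    then have "p1 * g1 \<le> 0" using e0a s0a by linarith
    then have "g1 \<le> 0" using p1 by (simp add: mult_le_0_iff)
    moreover have "m2p * t \<le> 0" using m True by (simp add: mult_nonneg_nonpos)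
    then have "p2 * g2 \<le> 0" using e0b s0b by linarith
    then have "g2 \<le> 0" using p2 by (simp add: mult_le_0_iff)
    ultimately show ?thesis by simp
  next
    case False
    show ?thesis
    proof (cases "t \<le> D")
      case True
      have le: "D * (g1 + g2) \<le> (K1 + K2) * t" using e1a e1b s1a s1b by (simp add: algebra_simps)
      show ?thesis
      proof (cases "K1 + K2 \<ge> 0")
        case True
        have "(K1 + K2) * t \<le> (K1 + K2) * D" using True \<open>t \<le> D\<close> by (simp add: mult_left_mono)
        then have "D * (g1 + g2) \<le> D * (K1 + K2)" using le by (simp add: mult.commute)
        then have "g1 + g2 \<le> K1 + K2" using Dpos by simp
        then show ?thesis by simp
      next
        case False
        have "(K1 + K2) * t \<le> 0" using False \<open>\<not> t \<le> 0\<close> by (simp add: mult_nonpos_nonneg)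
        then have "D * (g1 + g2) \<le> D * 0" using le by simp
        then have "g1 + g2 \<le> 0" using Dpos by (simp only: mult_le_cancel_left_pos)
        then show ?thesis by simp
      qed
    next
      case False
      have "m1m * (t - D) \<le> 0" using m False by (simp add: mult_nonpos_nonneg)
      then have "(1 - p1) * (g1 - K1) \<le> 0" using e2a s2a by linarith
      then have "g1 \<le> K1" using p1 by (simp add: mult_le_0_iff)
      moreover have "m2m * (t - D) \<le> 0" using m False by (simp add: mult_nonpos_nonneg)
      then have "(1 - p2) * (g2 - K2) \<le> 0" using e2b s2b by linarith
      then have "g2 \<le> K2" using p2 by (simp add: mult_le_0_iff)
      ultimately show ?thesis by simp
    qed
  qed
  have "A1 * m1p + B1 * m1m + A2 * m2p + B2 * m2m = g1 + g2 + (p2 * m1p + p1 * m2p)"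
    unfolding g1_def g2_def by simp
  moreover have "m1p + p2 * m1m + m2p + p1 * m2m = K1 + K2 + (p2 * m1p + p1 * m2p)"
    unfolding K1_def K2_def by algebra
  ultimately show ?thesis using main by (cases "K1 + K2 \<le> 0") (simp_all add: max_def)
qed


lemma chi_card: "card (chi (a, b)) = (if a > 0 then 1 else 0) + (if b > 0 then 1 else (0::nat))"
proof -
  have "chi (a, b) = (if a > 0 then {1} else {}) \<union> (if b > 0 then {2} else {})"
    by (auto simp: chi_def)
  then show ?thesis by auto
qed

lemma qmaj1_eq: "qmaj 1 z = (if fst z > 0 \<or> snd z > 0 then 1 else 0)"
  by (cases z) (simp add: qmaj_def chi_card)

lemma qmaj1_eq': "qmaj (Suc 0) z = (if fst z > 0 \<or> snd z > 0 then 1 else 0)"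
  using qmaj1_eq by simp

lemma qmaj2_eq: "qmaj 2 z = (if fst z > 0 \<and> snd z > 0 then 1 else 0)"
  by (cases z) (simp add: qmaj_def chi_card)

lemma qmaj1_meas: "qmaj 1 \<in> borel_measurable borel"
proof -
  have "(\<lambda>z::real \<times> real. if fst z > 0 \<or> snd z > 0 then 1 else (0::real)) \<in> borel_measurable borel"
    by (rule meas_from_pair) measurable
  moreover have "qmaj 1 = (\<lambda>z::real \<times> real. if fst z > 0 \<or> snd z > 0 then 1 else (0::real))"
    by (rule ext) (rule qmaj1_eq)
  ultimately show ?thesis by simp
qed

lemma qmaj2_meas: "qmaj 2 \<in> borel_measurable borel"
proof -
  have "(\<lambda>z::real \<times> real. if fst z > 0 \<and> snd z > 0 then 1 else (0::real)) \<in> borel_measurable borel"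
    by (rule meas_from_pair) measurable
  moreover have "qmaj 2 = (\<lambda>z::real \<times> real. if fst z > 0 \<and> snd z > 0 then 1 else (0::real))"
    by (rule ext) (rule qmaj2_eq)
  ultimately show ?thesis by simp
qed

lemma qmaj_01: "k \<in> {1, 2} \<Longrightarrow> 0 \<le> qmaj k z \<and> qmaj k z \<le> 1"
  by (auto simp: qmaj_def)

lemma qmaj_ints:
  fixes M :: "real measure"
  assumes P: "prob_space M" and S: "sets M = sets borel"
  shows "(\<integral>y. qmaj 1 (v, y) \<partial>M) = (if v > 0 then 1 else measure M {x. 0 < x})"
    and "(\<integral>y. qmaj 1 (y, v) \<partial>M) = (if v > 0 then 1 else measure M {x. 0 < x})"
    and "(\<integral>y. qmaj 2 (v, y) \<partial>M) = (if v > 0 then measure M {x. 0 < x} else 0)"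
    and "(\<integral>y. qmaj 2 (y, v) \<partial>M) = (if v > 0 then measure M {x. 0 < x} else 0)"
proof -
  interpret prob_space M by fact
  note ii = ind_pos(2)[OF P S]
  show "(\<integral>y. qmaj 1 (v, y) \<partial>M) = (if v > 0 then 1 else measure M {x. 0 < x})"
  proof (cases "v > 0")
    case True
    then show ?thesis by (simp add: qmaj1_eq qmaj1_eq' prob_space)
  next
    case False
    then have "(\<lambda>y. qmaj 1 (v, y)) = (\<lambda>y. indicator {x::real. 0 < x} y)"
      by (auto simp: qmaj1_eq qmaj1_eq' indicator_def)
    then show ?thesis using False ii by simp
  qed
  show "(\<integral>y. qmaj 1 (y, v) \<partial>M) = (if v > 0 then 1 else measure M {x. 0 < x})"
  proof (cases "v > 0")
    case True
    then show ?thesis by (simp add: qmaj1_eq qmaj1_eq' prob_space)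
  next
    case False
    then have "(\<lambda>y. qmaj 1 (y, v)) = (\<lambda>y. indicator {x::real. 0 < x} y)"
      by (auto simp: qmaj1_eq qmaj1_eq' indicator_def)
    then show ?thesis using False ii by simp
  qed
  show "(\<integral>y. qmaj 2 (v, y) \<partial>M) = (if v > 0 then measure M {x. 0 < x} else 0)"
  proof (cases "v > 0")
    case True
    then have "(\<lambda>y. qmaj 2 (v, y)) = (\<lambda>y. indicator {x::real. 0 < x} y)"
      by (auto simp: qmaj2_eq indicator_def)
    then show ?thesis using True ii by simp
  next
    case False
    then show ?thesis by (simp add: qmaj2_eq)
  qed
  show "(\<integral>y. qmaj 2 (y, v) \<partial>M) = (if v > 0 then measure M {x. 0 < x} else 0)"
  proof (cases "v > 0")
    case True
    then have "(\<lambda>y. qmaj 2 (y, v)) = (\<lambda>y. indicator {x::real. 0 < x} y)"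
      by (auto simp: qmaj2_eq indicator_def)
    then show ?thesis using True ii by simp
  next
    case False
    then show ?thesis by (simp add: qmaj2_eq)
  qed
qed

lemma BIC_of_step:
  fixes q :: "real \<Rightarrow> real" and V :: "real set" and A B :: real
  assumes "\<And>v. v \<in> V \<Longrightarrow> q v = (if v > 0 then A else B)" "B \<le> A"
  shows "\<forall>v\<in>V. \<forall>v'\<in>V. v * q v \<ge> v * q v'"
proof (intro ballI)
  fix v v' assume v: "v \<in> V" and v': "v' \<in> V"
  show "v * q v \<ge> v * q v'"
  proof (cases "v > 0")
    case True
    then have "q v' \<le> q v" using assms v v' by auto
    then show ?thesis using True by (simp add: mult_left_mono)
  next
    case False
    then have "q v \<le> q v'" using assms v v' by auto
    then show ?thesis using False by (simp add: mult_left_mono_neg)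
  qed
qed

lemma const_of_BIC:
  fixes q :: "real \<Rightarrow> real" and V :: "real set"
  assumes bic: "\<forall>v\<in>V. \<forall>v'\<in>V. v * q v \<ge> v * q v'" and z: "0 \<notin> V"
    and a: "a \<in> V" "0 < a" and b: "b \<in> V" "b < 0"
    and v: "v \<in> V"
  shows "q v = (if v > 0 then q a else q b)"
proof (cases "v > 0")
  case True
  have "v * q v \<ge> v * q a" using bic v a by auto
  then have 1: "q v \<ge> q a" using True by simp
  have "a * q a \<ge> a * q v" using bic v a by auto
  then have 2: "q a \<ge> q v" using a by simp
  show ?thesis using 1 2 True by simp
next
  case False
  then have vn: "v < 0" using v z by (cases "v = 0") auto
  have "v * q v \<ge> v * q b" using bic v b by auto
  then have 1: "q v \<le> q b" using vn by (simp add: mult_le_cancel_left)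
  have "b * q b \<ge> b * q v" using bic v b by auto
  then have 2: "q b \<le> q v" using b by (simp add: mult_le_cancel_left)
  show ?thesis using 1 2 False by simp
qed

theorem theorem1:
  fixes G1 G2 :: "real measure" and V :: "real set"
  assumes "standing_assumptions G1 G2 V"
  shows "(\<exists>k\<in>{1, 2}. solves_OPT G1 G2 V (qmaj k)) \<and>
         (\<exists>f. solves_OPT G1 G2 V f \<and> ordinal V f)"
proof -
  have P1: "prob_space G1" and P2: "prob_space G2" and S1: "sets G1 = sets borel" and S2: "sets G2 = sets borel"
    and sV1: "supp G1 = V" and sV2: "supp G2 = V" and z: "0 \<notin> V"
    and i1: "integrable G1 (\<lambda>x. x)" and i2: "integrable G2 (\<lambda>x. x)"
    and p1b: "0 < measure G1 {x. x > 0}" "measure G1 {x. x > 0} < 1"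
    and p2b: "0 < measure G2 {x. x > 0}" "measure G2 {x. x > 0} < 1"
    using assms unfolding standing_assumptions_def by auto
  define p1 where "p1 = measure G1 {x::real. 0 < x}"
  define p2 where "p2 = measure G2 {x::real. 0 < x}"
  have p1: "0 < p1" "p1 < 1" using p1b by (simp_all add: p1_def)
  have p2: "0 < p2" "p2 < 1" using p2b by (simp_all add: p2_def)
  have AEV1: "AE x in G1. x \<in> V" using AE_supp[OF P1 S1] sV1 by simp
  have AEV2: "AE x in G2. x \<in> V" using AE_supp[OF P2 S2] sV2 by simp
  have cV: "closed V" using closed_supp[OF P1 S1] sV1 by simp
  have posset: "{x \<in> space G1. 0 < x} \<in> sets G1" using S1 by (simp add: space_borel_M[OF S1])
  have ex_a: "\<exists>a\<in>V. 0 < a"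
  proof (rule ccontr)
    assume na: "\<not> (\<exists>a\<in>V. 0 < a)"
    have "AE x in G1. \<not> 0 < x" using AEV1 by eventually_elim (use na in auto)
    then have "measure G1 {x \<in> space G1. 0 < x} = 0"
      using prob_space.prob_Collect_eq_0[OF P1 posset] by blast
    then show False using p1 space_borel_M[OF S1] by (simp add: p1_def)
  qed
  then obtain a where a: "a \<in> V" "0 < a" by blast
  have ex_b: "\<exists>b\<in>V. b < 0"
  proof (rule ccontr)
    assume nb: "\<not> (\<exists>b\<in>V. b < 0)"
    have allpos: "\<And>x. x \<in> V \<Longrightarrow> 0 < x"
    proof -
      fix x assume "x \<in> V"
      then have "\<not> x < 0" "x \<noteq> 0" using nb z by auto
      then show "0 < x" by linarith
    qed
    have "AE x in G1. 0 < x" using AEV1 by eventually_elim (use allpos in auto)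
    then have "measure G1 {x \<in> space G1. 0 < x} = 1"
      using prob_space.prob_Collect_eq_1[OF P1 posset] by blast
    then show False using p1 space_borel_M[OF S1] by (simp add: p1_def)
  qed
  then obtain b where b: "b \<in> V" "b < 0" by blast
  define W1 where "W1 = mpos G1 + p2 * mneg G1 + mpos G2 + p1 * mneg G2"
  define W2 where "W2 = p2 * mpos G1 + p1 * mpos G2"
  have mp1: "0 \<le> mpos G1" unfolding mpos_def by (rule integral_nonneg_AE) auto
  have mp2: "0 \<le> mpos G2" unfolding mpos_def by (rule integral_nonneg_AE) auto
  have mn1: "mneg G1 \<le> 0"
  proof -
    have "0 \<le> (\<integral>x. - (if x > 0 then 0 else x) \<partial>G1)" by (rule integral_nonneg_AE) auto
    moreover have "(\<integral>x. - (if x > 0 then 0 else x) \<partial>G1) = - mneg G1"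
      unfolding mneg_def by (rule Bochner_Integration.integral_minus)
    ultimately show ?thesis by simp
  qed
  have mn2: "mneg G2 \<le> 0"
  proof -
    have "0 \<le> (\<integral>x. - (if x > 0 then 0 else x) \<partial>G2)" by (rule integral_nonneg_AE) auto
    moreover have "(\<integral>x. - (if x > 0 then 0 else x) \<partial>G2) = - mneg G2"
      unfolding mneg_def by (rule Bochner_Integration.integral_minus)
    ultimately show ?thesis by simp
  qed
  have qb1: "\<And>z. \<bar>qmaj 1 z\<bar> \<le> 1" by (simp add: qmaj_def)
  have qb2: "\<And>z. \<bar>qmaj 2 z\<bar> \<le> 1" by (simp add: qmaj_def)
  note qi1 = qmaj_ints[OF P1 S1, folded p1_def]
  note qi2 = qmaj_ints[OF P2 S2, folded p2_def]
  note qi1s = qi1[simplified] and qi2s = qi2[simplified]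
  have wq1: "welfare G1 G2 (qmaj 1) = W1"
  proof -
    have "welfare G1 G2 (qmaj 1) = 1 * mpos G1 + p2 * mneg G1 + 1 * mpos G2 + p1 * mneg G2"
      by (rule welfare_formula(1)[OF P1 P2 S1 S2 qmaj1_meas qb1 AEV1 AEV2 i1 i2]) (simp_all add: qi1 qi2 qi1s qi2s)
    then show ?thesis by (simp add: W1_def)
  qed
  have wq2: "welfare G1 G2 (qmaj 2) = W2"
  proof -
    have "welfare G1 G2 (qmaj 2) = p2 * mpos G1 + 0 * mneg G1 + p1 * mpos G2 + 0 * mneg G2"
      by (rule welfare_formula(1)[OF P1 P2 S1 S2 qmaj2_meas qb2 AEV1 AEV2 i1 i2]) (simp_all add: qi1 qi2 qi1s qi2s)
    then show ?thesis by (simp add: W2_def)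
  qed
  have feas1: "feasible G1 G2 V (qmaj 1)"
  proof -
    have "SCF V (qmaj 1)" unfolding SCF_def using qmaj1_meas qmaj_01[of 1] by auto
    moreover have "anonymous V (qmaj 1)" unfolding anonymous_def by (auto simp: qmaj1_eq qmaj1_eq')
    moreover have "BIC G1 G2 V (qmaj 1)"
    proof -
      have "\<forall>v\<in>V. \<forall>v'\<in>V. v * (\<lambda>v. \<integral>x. qmaj 1 (v, x) \<partial>G2) v \<ge> v * (\<lambda>v. \<integral>x. qmaj 1 (v, x) \<partial>G2) v'"
        by (rule BIC_of_step[where A=1 and B=p2]) (use qi2 qi2s p2 in auto)
      moreover have "\<forall>v\<in>V. \<forall>v'\<in>V. v * (\<lambda>v. \<integral>x. qmaj 1 (x, v) \<partial>G1) v \<ge> v * (\<lambda>v. \<integral>x. qmaj 1 (x, v) \<partial>G1) v'"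
        by (rule BIC_of_step[where A=1 and B=p1]) (use qi1 qi1s p1 in auto)
      ultimately show ?thesis unfolding BIC_def by simp
    qed
    ultimately show ?thesis unfolding feasible_def by simp
  qed
  have feas2: "feasible G1 G2 V (qmaj 2)"
  proof -
    have "SCF V (qmaj 2)" unfolding SCF_def using qmaj2_meas qmaj_01[of 2] by auto
    moreover have "anonymous V (qmaj 2)" unfolding anonymous_def by (auto simp: qmaj2_eq)
    moreover have "BIC G1 G2 V (qmaj 2)"
    proof -
      have "\<forall>v\<in>V. \<forall>v'\<in>V. v * (\<lambda>v. \<integral>x. qmaj 2 (v, x) \<partial>G2) v \<ge> v * (\<lambda>v. \<integral>x. qmaj 2 (v, x) \<partial>G2) v'"
        by (rule BIC_of_step[where A=p2 and B=0]) (use qi2 qi2s p2 in auto)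
      moreover have "\<forall>v\<in>V. \<forall>v'\<in>V. v * (\<lambda>v. \<integral>x. qmaj 2 (x, v) \<partial>G1) v \<ge> v * (\<lambda>v. \<integral>x. qmaj 2 (x, v) \<partial>G1) v'"
        by (rule BIC_of_step[where A=p1 and B=0]) (use qi1 qi1s p1 in auto)
      ultimately show ?thesis unfolding BIC_def by simp
    qed
    ultimately show ?thesis unfolding feasible_def by simp
  qed
  have VV[measurable]: "V \<times> V \<in> sets (borel :: (real \<times> real) measure)"
    using cV by (simp add: closed_Times borel_closed)
  have key: "welfare G1 G2 f \<le> max W1 W2" if feas: "feasible G1 G2 V f" for f
  proof -
    have fm[measurable]: "f \<in> borel_measurable borel" and f01: "\<forall>v\<in>V \<times> V. 0 \<le> f v \<and> f v \<le> 1"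
      and anon: "\<forall>a\<in>V. \<forall>b\<in>V. f (a, b) = f (b, a)"
      and bic1: "\<forall>v\<in>V. \<forall>v'\<in>V. v * (\<integral>x. f (v, x) \<partial>G2) \<ge> v * (\<integral>x. f (v', x) \<partial>G2)"
      and bic2: "\<forall>v\<in>V. \<forall>v'\<in>V. v * (\<integral>x. f (x, v) \<partial>G1) \<ge> v * (\<integral>x. f (x, v') \<partial>G1)"
      using feas unfolding feasible_def SCF_def anonymous_def BIC_def by auto
    define g where "g = (\<lambda>z. indicator (V \<times> V) z * f z :: real)"
    have gm: "g \<in> borel_measurable borel" unfolding g_def by measurable
    have g01: "\<And>z. 0 \<le> g z \<and> g z \<le> 1" using f01 by (auto simp: g_def indicator_def)
    have gb: "\<And>z. \<bar>g z\<bar> \<le> 1" using g01 by (simp add: abs_le_iff)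
    have gsym: "\<And>x y. g (x, y) = g (y, x)" using anon by (auto simp: g_def indicator_def)
    have sl1: "(\<integral>y. f (v, y) \<partial>G2) = (\<integral>y. g (v, y) \<partial>G2)" if v: "v \<in> V" for v
    proof (rule integral_cong_AE)
      show "(\<lambda>y. f (v, y)) \<in> borel_measurable G2" by (rule meas_slice1[OF fm S2])
      show "(\<lambda>y. g (v, y)) \<in> borel_measurable G2" by (rule meas_slice1[OF gm S2])
      show "AE y in G2. f (v, y) = g (v, y)" using AEV2 by eventually_elim (simp add: g_def v)
    qed
    have sl2: "(\<integral>y. f (y, v) \<partial>G1) = (\<integral>y. g (y, v) \<partial>G1)" if v: "v \<in> V" for v
    proof (rule integral_cong_AE)
      show "(\<lambda>y. f (y, v)) \<in> borel_measurable G1" by (rule meas_slice2[OF fm S1])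
      show "(\<lambda>y. g (y, v)) \<in> borel_measurable G1" by (rule meas_slice2[OF gm S1])
      show "AE y in G1. f (y, v) = g (y, v)" using AEV1 by eventually_elim (simp add: g_def v)
    qed
    define Q1 where "Q1 = (\<lambda>v. \<integral>y. g (v, y) \<partial>G2)"
    define Q2 where "Q2 = (\<lambda>v. \<integral>y. g (y, v) \<partial>G1)"
    have Q2': "Q2 v = (\<integral>y. g (v, y) \<partial>G1)" for v
    proof -
      have "(\<lambda>y. g (y, v)) = (\<lambda>y. g (v, y))" using gsym by auto
      then show ?thesis by (simp add: Q2_def)
    qed
    have bq1: "\<forall>v\<in>V. \<forall>v'\<in>V. v * Q1 v \<ge> v * Q1 v'"
    proof (intro ballI)
      fix v v' assume vv: "v \<in> V" "v' \<in> V"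
      have "v * (\<integral>x. f (v, x) \<partial>G2) \<ge> v * (\<integral>x. f (v', x) \<partial>G2)" using bic1 vv by blast
      then show "v * Q1 v \<ge> v * Q1 v'" using sl1[OF vv(1)] sl1[OF vv(2)] by (simp add: Q1_def)
    qed
    have bq2: "\<forall>v\<in>V. \<forall>v'\<in>V. v * Q2 v \<ge> v * Q2 v'"
    proof (intro ballI)
      fix v v' assume vv: "v \<in> V" "v' \<in> V"
      have "v * (\<integral>x. f (x, v) \<partial>G1) \<ge> v * (\<integral>x. f (x, v') \<partial>G1)" using bic2 vv by blast
      then show "v * Q2 v \<ge> v * Q2 v'" using sl2[OF vv(1)] sl2[OF vv(2)] by (simp add: Q2_def)
    qed
    define A1 where "A1 = Q1 a"
    define B1 where "B1 = Q1 b"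
    define A2 where "A2 = Q2 a"
    define B2 where "B2 = Q2 b"
    have q1: "(\<integral>y. g (v, y) \<partial>G2) = (if v > 0 then A1 else B1)" if "v \<in> V" for v
      using const_of_BIC[OF bq1 z a b, where v=v] that by (simp add: Q1_def A1_def B1_def)
    have q2: "(\<integral>y. g (y, v) \<partial>G1) = (if v > 0 then A2 else B2)" if "v \<in> V" for v
      using const_of_BIC[OF bq2 z a b, where v=v] that by (simp add: Q2_def A2_def B2_def)
    have q2': "(\<integral>y. g (v, y) \<partial>G1) = (if v > 0 then A2 else B2)" if "v \<in> V" for v
      using q2[OF that] Q2'[of v] by (simp add: Q2_def)
    have wfg: "welfare G1 G2 g = A1 * mpos G1 + B1 * mneg G1 + A2 * mpos G2 + B2 * mneg G2"
      by (rule welfare_formula(1)[OF P1 P2 S1 S2 gm gb AEV1 AEV2 i1 i2 q1 q2])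
    have cc0: "A1 * p1 + B1 * (1 - p1) = A2 * p2 + B2 * (1 - p2)"
      using welfare_formula(2)[OF P1 P2 S1 S2 gm gb AEV1 AEV2 i1 i2 q1 q2] by (simp add: p1_def p2_def)
    have cc: "p1 * A1 + (1 - p1) * B1 = p2 * A2 + (1 - p2) * B2"
      using cc0 by (simp add: algebra_simps)
    have ca: "p2 * A1 - (1 - p2) * B1 \<le> p2\<^sup>2"
      using constraint[OF P2 S2 gm g01 gsym AEV2 i2 q1] by (simp add: p2_def)
    have cb: "p1 * A2 - (1 - p1) * B2 \<le> p1\<^sup>2"
      using constraint[OF P1 S1 gm g01 gsym AEV1 i1 q2'] by (simp add: p1_def)
    have A1le: "A1 \<le> 1" unfolding A1_def Q1_def by (rule slice_bounds(2)[OF P2 S2 gm g01])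
    have B1ge: "0 \<le> B1" unfolding B1_def Q1_def by (rule slice_bounds(1)[OF P2 S2 gm g01])
    have A2le: "A2 \<le> 1" unfolding A2_def Q2' by (rule slice_bounds(2)[OF P1 S1 gm g01])
    have B2ge: "0 \<le> B2" unfolding B2_def Q2' by (rule slice_bounds(1)[OF P1 S1 gm g01])
    have "welfare G1 G2 f = welfare G1 G2 g" unfolding welfare_def
    proof (rule integral_cong_AE)
      have fm': "f \<in> borel_measurable (borel \<Otimes>\<^sub>M borel)" using fm by (simp add: borel_prod)
      have gm': "g \<in> borel_measurable (borel \<Otimes>\<^sub>M borel)" using gm by (simp add: borel_prod)
      have "(\<lambda>z. f z * (fst z + snd z)) \<in> borel_measurable borel"
        by (rule meas_from_pair) (use fm' in measurable)
      then show "(\<lambda>z. f z * (fst z + snd z)) \<in> borel_measurable (G1 \<Otimes>\<^sub>M G2)" by (rule meas_prod[OF _ S1 S2])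
      have "(\<lambda>z. g z * (fst z + snd z)) \<in> borel_measurable borel"
        by (rule meas_from_pair) (use gm' in measurable)
      then show "(\<lambda>z. g z * (fst z + snd z)) \<in> borel_measurable (G1 \<Otimes>\<^sub>M G2)" by (rule meas_prod[OF _ S1 S2])
      interpret P: pair_prob_space G1 G2
        by (simp add: pair_prob_space_def pair_sigma_finite_def prob_space_imp_sigma_finite P1 P2)
      have "AE z in G1 \<Otimes>\<^sub>M G2. z \<in> V \<times> V"
      proof (rule P.AE_pair_measure)
        show "{x \<in> space (G1 \<Otimes>\<^sub>M G2). x \<in> V \<times> V} \<in> sets (G1 \<Otimes>\<^sub>M G2)"
          using VV by (simp add: space_pair_measure space_borel_M[OF S1] space_borel_M[OF S2] sets_prod[OF S1 S2])
        show "AE x in G1. AE y in G2. (x, y) \<in> V \<times> V"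
          using AEV1
        proof eventually_elim
          fix x assume xv: "x \<in> V"
          show "AE y in G2. (x, y) \<in> V \<times> V" using AEV2 by eventually_elim (simp add: xv)
        qed
      qed
      then show "AE z in G1 \<Otimes>\<^sub>M G2. f z * (fst z + snd z) = g z * (fst z + snd z)"
        by eventually_elim (simp add: g_def)
    qed
    also have "\<dots> = A1 * mpos G1 + B1 * mneg G1 + A2 * mpos G2 + B2 * mneg G2" by (rule wfg)
    also have "\<dots> \<le> max (mpos G1 + p2 * mneg G1 + mpos G2 + p1 * mneg G2) (p2 * mpos G1 + p1 * mpos G2)"
      by (rule LP_bound[OF p1 p2 mp1 mn1 mp2 mn2 A1le B1ge A2le B2ge ca cb cc])
    finally show ?thesis by (simp add: W1_def W2_def)
  qed
  show ?thesis
  proof (cases "W2 \<le> W1")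
    case True
    have "solves_OPT G1 G2 V (qmaj 1)"
      unfolding solves_OPT_def using feas1 key wq1 True by (auto simp: max_def)
    moreover have "ordinal V (qmaj 1)" by (auto simp: ordinal_def qmaj_def)
    ultimately show ?thesis by blast
  next
    case False
    have "solves_OPT G1 G2 V (qmaj 2)"
      unfolding solves_OPT_def using feas2 key wq2 False by (auto simp: max_def)
    moreover have "ordinal V (qmaj 2)" by (auto simp: ordinal_def qmaj_def)
    ultimately show ?thesis by blast
  qed
qed

end
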